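(* For all integers $M,N\ge2$, $\lim_{p\to\infty}\delta_p(M,N)=0$.
   Context: For integers $M,N,p\ge1$, $\delta_p(M,N)=\frac{1}{(MN)^p}\#\{(a,b)\in\mathbb Z_M^p\times\mathbb Z_N^p:\{(a_y,b_y)\}_{y=1}^p=\{(a_y,b_{y+1})\}_{y=1}^p\text{ as multisets}\}$, with $b_{p+1}=b_1$. *)

theory Defs
  imports Complex_Main "HOL-Library.FuncSet" "HOL-Library.Multiset"
begin

text \<open>Tuples in Z_M^p are represented as extensional functions {0..<p} -> {0..<M}
  (index y in 0..p-1 corresponds to y+1 in the paper; the cyclic successor is (y+1) mod p).\<close>

definition delta :: "nat \<Rightarrow> nat \<Rightarrow> nat \<Rightarrow> real" where
  "delta p M N =
     real (card {(a, b). a \<in> {0..<p} \<rightarrow>\<^sub>E {0..<M} \<and> b \<in> {0..<p} \<rightarrow>\<^sub>E {0..<N} \<and>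
        image_mset (\<lambda>y. (a y, b y)) (mset_set {0..<p})
        = image_mset (\<lambda>y. (a y, b ((y + 1) mod p))) (mset_set {0..<p})})
     / (real (M * N)) ^ p"

end

theory Submission
  imports Defs
begin

lemma c1: "(2*n+1) * ((2*n) choose n) = (Suc n) * ((2*n+1) choose n)"
proof -
  have "Suc (2*n) * ((2*n) choose n) = (Suc (2*n) choose Suc n) * Suc n" by (rule Suc_times_binomial_eq)
  moreover have "(Suc (2*n) choose Suc n) = (Suc (2*n) choose n)"
    using binomial_symmetric[of n "Suc (2*n)"] by simp
  ultimately show ?thesis by simp
qed
lemma c2: "(2*n+2) choose (n+1) = 2 * ((2*n+1) choose n)"
proof -
  have "(Suc (Suc (2*n)) choose Suc n) = (Suc (2*n) choose n) + (Suc (2*n) choose Suc n)" by simp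
  moreover have "(Suc (2*n) choose Suc n) = (Suc (2*n) choose n)"
    using binomial_symmetric[of n "Suc (2*n)"] by simp
  ultimately show ?thesis by simp
qed

definition hh :: "nat \<Rightarrow> real" where "hh k = real (k choose (k div 2)) / 2^k"

lemma hh_odd: "hh (2*n+1) = hh (2*n) * (2*n+1) / (2*n+2)"
proof -
  have e: "(2*n+1) div 2 = n" "(2*n) div 2 = n" by auto
  have "real (2*n+1) * real ((2*n) choose n) = real (Suc n) * real ((2*n+1) choose n)"
    using c1[of n] by (metis of_nat_mult)
  then have x: "real ((2*n+1) choose n) = (2*n+1) * real((2*n) choose n) / (n+1)"
    by (simp add: field_simps)
  have "hh (2*n+1) = real ((2*n+1) choose n) / (2 * 2^(2*n))" unfolding hh_def e by simp
  also have "\<dots> = (2*n+1) * real((2*n) choose n) / (n+1) / (2 * 2^(2*n))" using x by simp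
  also have "\<dots> = hh (2*n) * (2*n+1) / (2*n+2)" unfolding hh_def e by (simp add: field_simps)
  finally show ?thesis .
qed

lemma hh_even: "hh (2*n+2) = hh (2*n+1)"
proof -
  have e: "(2*n+1) div 2 = n" "(2*n+2) div 2 = n+1" by auto
  show ?thesis unfolding hh_def e using c2[of n] by (simp add: field_simps)
qed

lemma aux: "(x::real) > 0 \<Longrightarrow> 1/x*(x^2/y) = x/y"
  by (simp add: power2_eq_square)

lemma hh_sq_even: "hh (2*n) ^ 2 \<le> 1 / (2*n+1)"
proof (induction n)
  case 0 then show ?case by (simp add: hh_def)
next
  case (Suc n)
  have eq: "hh (2 * Suc n) = hh (2*n) * (2*n+1)/(2*n+2)"
  proof -
    have "2 * Suc n = 2*n+2" by simp
    then show ?thesis using hh_odd[of n] hh_even[of n] by simp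
  qed
  have "hh (2 * Suc n)^2 = hh (2*n)^2 * ((2*n+1)^2/(2*n+2)^2)"
    unfolding eq by (simp add: power_divide power_mult_distrib)
  also have "\<dots> \<le> 1/(2*n+1) * ((2*n+1)^2/(2*n+2)^2)"
    by (rule mult_right_mono) (use Suc.IH in \<open>simp_all add: add.commute\<close>)
  also have "\<dots> = (2*n+1)/(2*n+2)^2" by (simp only: of_nat_power, rule aux) simp
  also have "\<dots> \<le> 1 / (2 * real (Suc n) + 1)"
    by (simp add: field_simps power2_eq_square) (simp add: divide_le_eq_1, rule disjI1, simp add: add_pos_nonneg)
  finally show ?case .
qed

lemma hh_nonneg: "hh k \<ge> 0" by (simp add: hh_def)

lemma hh_sq: "hh k ^ 2 \<le> 1 / (real k+1)"
proof (cases "even k")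
  case True
  then obtain n where "k = 2*n" by auto
  then show ?thesis using hh_sq_even[of n] by simp
next
  case False
  then obtain n where k: "k = 2*n+1" using oddE by blast
  have "hh k ^2 = hh (2*(n+1))^2" using hh_even[of n] k by (simp add: algebra_simps)
  also have "\<dots> \<le> 1/(2*(n+1)+1)" using hh_sq_even[of "n+1"] by simp
  also have "\<dots> \<le> 1/(real k+1)" using k by (simp add: field_simps)
  finally show ?thesis .
qed

lemma hh_le1: "hh k \<le> 1"
proof -
  have "1 / (real k+1) \<le> 1" by simp
  then have "hh k ^ 2 \<le> 1" using hh_sq[of k] by linarith
  then show ?thesis using hh_nonneg[of k] by (simp add: power_le_one_iff abs_le_square_iff)
qed

lemma hh_small: assumes "e > 0" shows "\<exists>m. \<forall>k\<ge>m. hh k \<le> e"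
proof -
  obtain m :: nat where m: "1 / e^2 < m" using reals_Archimedean2 by blast
  have "hh k \<le> e" if "k \<ge> m" for k
  proof -
    have "hh k ^2 \<le> 1/(real k+1)" by (rule hh_sq)
    also have "1/(real k+1) \<le> 1/(1/e^2)"
    proof (rule divide_left_mono)
      have "real m \<le> real k" using that by simp
      then show "1/e^2 \<le> real k + 1" using m by linarith
    qed (use assms in auto)
    also have "1/(1/e^2) = e^2" by simp
    finally have "hh k ^ 2 \<le> e^2" by simp
    then show ?thesis using assms hh_nonneg[of k] by (simp add: power2_le_iff_abs_le)
  qed
  then show ?thesis by blast
qed



lemma fiber_bound:
  fixes w :: "'a \<Rightarrow> real" and \<phi> :: "'a \<Rightarrow> 'b"
  assumes fin: "finite X" and GX: "G \<subseteq> X"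
    and fib: "\<And>y. y \<in> \<phi> ` X \<Longrightarrow> real (card (G \<inter> {x\<in>X. \<phi> x = y})) \<le> (\<Sum>x\<in>{x\<in>X. \<phi> x = y}. w x)"
  shows "real (card G) \<le> (\<Sum>x\<in>X. w x)"
proof -
  have finG: "finite G" using fin GX finite_subset by blast
  have "real (card G) = (\<Sum>x\<in>G. (1::real))" by simp
  also have "\<dots> = (\<Sum>y\<in>\<phi> ` X. \<Sum>x\<in>{x. x\<in>G \<and> \<phi> x = y}. (1::real))"
    by (rule sum.group[symmetric]) (use finG fin GX in auto)
  also have "\<dots> = (\<Sum>y\<in>\<phi> ` X. real (card (G \<inter> {x\<in>X. \<phi> x = y})))"
    by (rule sum.cong) (use GX in \<open>auto intro: arg_cong[where f=card]\<close>)
  also have "\<dots> \<le> (\<Sum>y\<in>\<phi> ` X. \<Sum>x\<in>{x. x\<in>X \<and> \<phi> x = y}. w x)"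
    by (rule sum_mono) (use fib in auto)
  also have "\<dots> = (\<Sum>x\<in>X. w x)"
    by (rule sum.group) (use fin in auto)
  finally show ?thesis .
qed

lemma count_img: "finite A \<Longrightarrow> count (image_mset f (mset_set A)) z = card {x\<in>A. f x = z}"
proof -
  assume fA: "finite A"
  have "count (image_mset f (mset_set A)) z = (\<Sum>y\<in>f -` {z} \<inter> A. count (mset_set A) y)"
    by (simp add: count_image_mset fA)
  also have "\<dots> = (\<Sum>y\<in>f -` {z} \<inter> A. 1)" by (rule sum.cong) (use fA in auto)
  also have "\<dots> = card {x\<in>A. f x = z}" by (simp add: Int_commute Collect_conj_eq vimage_def)
  finally show ?thesis .
qed




definition Om :: "nat \<Rightarrow> nat \<Rightarrow> nat \<Rightarrow> ((nat\<Rightarrow>nat)\<times>(nat\<Rightarrow>nat)) set" where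
  "Om p M N = ({0..<p} \<rightarrow>\<^sub>E {0..<M}) \<times> ({0..<p} \<rightarrow>\<^sub>E {0..<N})"

definition act :: "(nat\<Rightarrow>nat) \<Rightarrow> (nat\<Rightarrow>nat) \<Rightarrow> nat \<Rightarrow> bool" where
  "act a b i \<longleftrightarrow> a (i-1) \<noteq> 0 \<and> a i = 0 \<and> b i < 2"

definition coin :: "nat \<Rightarrow> (nat\<Rightarrow>nat) \<Rightarrow> (nat\<Rightarrow>nat) \<Rightarrow> nat set" where
  "coin p a b = {i\<in>{0..<p}. odd i \<and> act a b i}"

definition LL :: "nat \<Rightarrow> (nat\<Rightarrow>nat) \<Rightarrow> (nat\<Rightarrow>nat) \<Rightarrow> nat" where
  "LL p a b = card {i\<in>{0..<p}. a i = 0 \<and> b i = 0}"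
definition RR :: "nat \<Rightarrow> (nat\<Rightarrow>nat) \<Rightarrow> (nat\<Rightarrow>nat) \<Rightarrow> nat" where
  "RR p a b = card {i\<in>{0..<p}. a i = 0 \<and> b ((i+1) mod p) = 0}"

definition low :: "nat \<Rightarrow> (nat\<Rightarrow>nat)\<times>(nat\<Rightarrow>nat) \<Rightarrow> (nat\<Rightarrow>nat)\<times>(nat\<Rightarrow>nat)" where
  "low p x = (fst x, \<lambda>i. if i \<in> coin p (fst x) (snd x) then 0 else snd x i)"

definition setT :: "(nat\<Rightarrow>nat) \<Rightarrow> (nat\<Rightarrow>nat) \<Rightarrow> nat set \<Rightarrow> (nat\<Rightarrow>nat)\<times>(nat\<Rightarrow>nat)" where
  "setT a b0 T = (a, \<lambda>i. if i \<in> T then 1 else b0 i)"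

lemma finite_Om: "finite (Om p M N)" unfolding Om_def by (intro finite_cartesian_product finite_PiE) auto

lemma coin_cong: "(\<And>i. (b' i < 2) = (b i < 2)) \<Longrightarrow> coin p a b' = coin p a b"
  unfolding coin_def act_def by auto

lemma coin_sub: "coin p a b \<subseteq> {0..<p}" unfolding coin_def by auto

lemma good_sub:
  "{(a, b). a \<in> {0..<p} \<rightarrow>\<^sub>E {0..<M} \<and> b \<in> {0..<p} \<rightarrow>\<^sub>E {0..<N} \<and>
        image_mset (\<lambda>y. (a y, b y)) (mset_set {0..<p})
        = image_mset (\<lambda>y. (a y, b ((y + 1) mod p))) (mset_set {0..<p})}
   \<subseteq> {x\<in>Om p M N. LL p (fst x) (snd x) = RR p (fst x) (snd x)}"
proof clarify
  fix a b
  assume A: "a \<in> {0..<p} \<rightarrow>\<^sub>E {0..<M}" "b \<in> {0..<p} \<rightarrow>\<^sub>E {0..<N}"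
    and E: "image_mset (\<lambda>y. (a y, b y)) (mset_set {0..<p})
        = image_mset (\<lambda>y. (a y, b ((y + 1) mod p))) (mset_set {0..<p})"
  have "count (image_mset (\<lambda>y. (a y, b y)) (mset_set {0..<p})) (0,0)
      = count (image_mset (\<lambda>y. (a y, b ((y + 1) mod p))) (mset_set {0..<p})) (0,0)" using E by (simp only:)
  then have "card {y\<in>{0..<p}. (a y, b y) = (0,0)} = card {y\<in>{0..<p}. (a y, b ((y + 1) mod p)) = (0,0)}"
    by (simp only: count_img finite_atLeastLessThan)
  then show "(a, b) \<in> Om p M N \<and> LL p (fst (a, b)) (snd (a, b)) = RR p (fst (a, b)) (snd (a, b))"
    using A unfolding Om_def LL_def RR_def by simp
qed

lemma setT_LL:
  assumes "T \<subseteq> coin p a b0" "\<forall>i\<in>coin p a b0. b0 i = 0"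
  shows "LL p a (snd (setT a b0 T)) = LL p a b0 - card T"
proof -
  have "{i\<in>{0..<p}. a i = 0 \<and> snd (setT a b0 T) i = 0} = {i\<in>{0..<p}. a i = 0 \<and> b0 i = 0} - T"
    unfolding setT_def by auto
  moreover have sub: "T \<subseteq> {i\<in>{0..<p}. a i = 0 \<and> b0 i = 0}"
  proof
    fix i assume "i \<in> T"
    then have c: "i \<in> coin p a b0" using assms(1) by blast
    then have "b0 i = 0" using assms(2) by blast
    moreover have "i \<in> {0..<p} \<and> a i = 0" using c unfolding coin_def act_def by blast
    ultimately show "i \<in> {i\<in>{0..<p}. a i = 0 \<and> b0 i = 0}" by blast
  qed
  moreover have "finite T" by (rule finite_subset[OF sub]) simp
  ultimately show ?thesis unfolding LL_def by (simp only: card_Diff_subset)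
qed

lemma setT_RR:
  assumes "T \<subseteq> coin p a b0"
  shows "RR p a (snd (setT a b0 T)) = RR p a b0"
proof -
  have "{i\<in>{0..<p}. a i = 0 \<and> snd (setT a b0 T) ((i+1) mod p) = 0}
      = {i\<in>{0..<p}. a i = 0 \<and> b0 ((i+1) mod p) = 0}"
  proof (intro Collect_cong conj_cong refl)
    fix i assume i: "i \<in> {0..<p}" and ai: "a i = 0"
    have "(i+1) mod p \<notin> T"
    proof
      assume "(i+1) mod p \<in> T"
      then have c: "(i+1) mod p \<in> coin p a b0" using assms by auto
      show False
      proof (cases "i+1 < p")
        case True
        then have "(i+1) mod p = i+1" by simp
        then show False using c ai unfolding coin_def act_def by auto
      next
        case False
        then have "i + 1 = p" using i by auto
        then have "(i+1) mod p = 0" by simp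
        then show False using c unfolding coin_def by auto
      qed
    qed
    then show "(snd (setT a b0 T) ((i+1) mod p) = 0) = (b0 ((i+1) mod p) = 0)"
      unfolding setT_def by simp
  qed
  then show ?thesis unfolding RR_def by simp
qed




lemma low_coin: "coin p (fst (low p x)) (snd (low p x)) = coin p (fst x) (snd x)"
  unfolding low_def by (simp, rule coin_cong) (auto simp: coin_def act_def)

lemma low_zero: "i \<in> coin p (fst x) (snd x) \<Longrightarrow> snd (low p x) i = 0"
  unfolding low_def by simp

lemma low_Om: "x \<in> Om p M N \<Longrightarrow> N > 0 \<Longrightarrow> low p x \<in> Om p M N"
proof -
  assume x: "x \<in> Om p M N" and N: "N > 0"
  obtain a b where ab: "x = (a,b)" by force
  have "(\<lambda>i. if i \<in> coin p a b then 0 else b i) \<in> {0..<p} \<rightarrow>\<^sub>E {0..<N}"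
    using x N coin_sub[of p a b] unfolding ab Om_def by (auto simp: PiE_def Pi_def extensional_def)
  moreover have "low p x = (a, \<lambda>i. if i \<in> coin p a b then 0 else b i)" by (simp add: ab low_def fun_eq_iff)
  ultimately show ?thesis using x unfolding ab Om_def by simp
qed

lemma anti:
  assumes N: "N \<ge> 2"
  shows "real (card {x\<in>Om p M N. LL p (fst x) (snd x) = RR p (fst x) (snd x)})
     \<le> (\<Sum>x\<in>Om p M N. hh (card (coin p (fst x) (snd x))))"
proof (rule fiber_bound[where \<phi> = "low p"])
  show "finite (Om p M N)" by (rule finite_Om)
  show "{x\<in>Om p M N. LL p (fst x) (snd x) = RR p (fst x) (snd x)} \<subseteq> Om p M N" by blast
  fix y assume "y \<in> low p ` Om p M N"
  then obtain x0 where x0: "x0 \<in> Om p M N" and y: "y = low p x0" by blast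
  define a where "a = fst y"
  define b0 where "b0 = snd y"
  define C where "C = coin p a b0"
  have a: "a = fst x0" unfolding a_def y low_def by simp
  have C: "C = coin p (fst x0) (snd x0)" unfolding C_def a_def b0_def y by (rule low_coin)
  have b0C: "\<forall>i\<in>C. b0 i = 0" unfolding b0_def y using low_zero C by blast
  have finC: "finite C" unfolding C_def by (rule finite_subset[OF coin_sub]) simp
  define F where "F = {x\<in>Om p M N. low p x = y}"
  have y_eq: "y = (a, b0)" unfolding a_def b0_def by simp
  have inF: "x = setT a b0 {i\<in>C. snd x i = 1} \<and> coin p (fst x) (snd x) = C" if xF: "x \<in> F" for x
  proof -
    have xO: "x \<in> Om p M N" and lx: "low p x = y" using xF unfolding F_def by auto
    have fx: "fst x = a" using lx unfolding a_def low_def by auto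
    have cx: "coin p (fst x) (snd x) = C" unfolding C_def a_def b0_def lx[symmetric] by (rule low_coin[symmetric])
    have sb: "snd x i = (if i \<in> {i\<in>C. snd x i = 1} then 1 else b0 i)" for i
    proof (cases "i \<in> C")
      case True
      then have "snd x i < 2" using cx unfolding coin_def act_def by auto
      moreover have "b0 i = 0" using True b0C by blast
      ultimately show ?thesis using True by auto
    next
      case False
      then have "b0 i = snd x i" unfolding b0_def lx[symmetric] low_def using cx by simp
      then show ?thesis using False by simp
    qed
    have "x = setT a b0 {i\<in>C. snd x i = 1}"
      unfolding setT_def using fx sb by (simp add: prod_eq_iff)
    then show ?thesis using cx by simp
  qed
  have setT_in: "setT a b0 T \<in> F" if T: "T \<subseteq> C" for T
  proof -
    have "low p x0 \<in> Om p M N" using low_Om[OF x0] N by simp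
    then have yO: "y \<in> Om p M N" using y by simp
    have "snd (setT a b0 T) \<in> {0..<p} \<rightarrow>\<^sub>E {0..<N}"
    proof -
      have "b0 \<in> {0..<p} \<rightarrow>\<^sub>E {0..<N}" using yO y_eq unfolding Om_def by auto
      moreover have "T \<subseteq> {0..<p}" using T coin_sub unfolding C_def by blast
      ultimately show ?thesis unfolding setT_def using N by (auto simp: PiE_def Pi_def extensional_def)
    qed
    moreover have "a \<in> {0..<p} \<rightarrow>\<^sub>E {0..<M}" using yO y_eq unfolding Om_def by auto
    ultimately have O: "setT a b0 T \<in> Om p M N" unfolding Om_def setT_def by auto
    have cT: "coin p a (snd (setT a b0 T)) = C"
      unfolding C_def setT_def by (simp, rule coin_cong) (use T b0C in auto)
    have e1: "fst (setT a b0 T) = a" by (simp add: setT_def)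
    have "low p (setT a b0 T) = (a, \<lambda>i. if i \<in> C then 0 else snd (setT a b0 T) i)"
      unfolding low_def e1 cT ..
    also have "\<dots> = y" unfolding y_eq using T b0C by (auto simp: setT_def fun_eq_iff)
    finally have "low p (setT a b0 T) = y" .
    then show ?thesis using O unfolding F_def by simp
  qed
  have inj: "inj_on (setT a b0) (Pow C)"
  proof (rule inj_onI)
    fix S T assume S: "S \<in> Pow C" and T: "T \<in> Pow C" and e: "setT a b0 S = setT a b0 T"
    show "S = T"
    proof (rule set_eqI)
      fix i
      have "snd (setT a b0 S) i = snd (setT a b0 T) i" using e by simp
      then show "i \<in> S \<longleftrightarrow> i \<in> T" using S T b0C unfolding setT_def by (auto split: if_splits)
    qed
  qed
  define s where "s = LL p a b0 - RR p a b0"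
  have Gsub: "{x\<in>Om p M N. LL p (fst x) (snd x) = RR p (fst x) (snd x)} \<inter> F
        \<subseteq> setT a b0 ` {T. T \<subseteq> C \<and> card T = s}"
  proof
    fix x assume xG: "x \<in> {x\<in>Om p M N. LL p (fst x) (snd x) = RR p (fst x) (snd x)} \<inter> F"
    define T where "T = {i\<in>C. snd x i = 1}"
    have xT: "x = setT a b0 T" using inF xG unfolding T_def by blast
    have TC: "T \<subseteq> C" unfolding T_def by blast
    have "LL p a (snd (setT a b0 T)) = RR p a (snd (setT a b0 T))"
      using xG xT by (simp add: setT_def)
    then have e: "LL p a b0 - card T = RR p a b0"
      using setT_LL[OF TC[unfolded C_def] b0C[unfolded C_def]] setT_RR[OF TC[unfolded C_def]] by simp
    have "T \<subseteq> {i\<in>{0..<p}. a i = 0 \<and> b0 i = 0}"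
    proof
      fix i assume "i \<in> T"
      then have c: "i \<in> C" using TC by blast
      then have "b0 i = 0" using b0C by blast
      moreover have "i \<in> {0..<p} \<and> a i = 0" using c unfolding C_def coin_def act_def by blast
      ultimately show "i \<in> {i\<in>{0..<p}. a i = 0 \<and> b0 i = 0}" by blast
    qed
    then have "card T \<le> LL p a b0" unfolding LL_def by (rule card_mono[rotated]) simp
    then have "card T = s" using e unfolding s_def by linarith
    then show "x \<in> setT a b0 ` {T. T \<subseteq> C \<and> card T = s}" using xT TC by blast
  qed
  have fin1: "finite {T. T \<subseteq> C \<and> card T = s}"
    by (rule finite_subset[of _ "Pow C"]) (use finC in auto)
  have finF: "finite F" unfolding F_def by (rule finite_subset[OF _ finite_Om]) blast
  have "real (card ({x\<in>Om p M N. LL p (fst x) (snd x) = RR p (fst x) (snd x)} \<inter> F))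
      \<le> real (card (setT a b0 ` {T. T \<subseteq> C \<and> card T = s}))"
    by (intro of_nat_mono card_mono finite_imageI fin1 Gsub)
  also have "\<dots> \<le> real (card {T. T \<subseteq> C \<and> card T = s})" by (intro of_nat_mono card_image_le fin1)
  also have "\<dots> = real (card C choose s)" using n_subsets[OF finC] by simp
  also have "\<dots> \<le> real (card C choose (card C div 2))" by (simp add: binomial_maximum)
  also have "\<dots> = 2 ^ card C * hh (card C)" unfolding hh_def by simp
  also have "\<dots> = real (card (setT a b0 ` Pow C)) * hh (card C)"
    using card_image[OF inj] finC by (simp add: card_Pow)
  also have "\<dots> \<le> real (card F) * hh (card C)"
  proof (rule mult_right_mono)
    show "real (card (setT a b0 ` Pow C)) \<le> real (card F)"
      by (intro of_nat_mono card_mono finF) (use setT_in in blast)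
  qed (rule hh_nonneg)
  also have "\<dots> = (\<Sum>x\<in>F. hh (card C))" by simp
  also have "\<dots> = (\<Sum>x\<in>F. hh (card (coin p (fst x) (snd x))))"
    by (rule sum.cong) (use inF in auto)
  finally show "real (card ({x\<in>Om p M N. LL p (fst x) (snd x) = RR p (fst x) (snd x)} \<inter> {x\<in>Om p M N. low p x = y}))
      \<le> (\<Sum>x\<in>{x\<in>Om p M N. low p x = y}. hh (card (coin p (fst x) (snd x))))"
    unfolding F_def .
qed




lemma upd_PiE: "f \<in> Pi\<^sub>E S T \<Longrightarrow> x \<in> S \<Longrightarrow> y \<in> T x \<Longrightarrow> f(x := y) \<in> Pi\<^sub>E S T"
  using PiE_fun_upd[of y T x f S] by (simp add: insert_absorb)

lemma aux2: "(D::real) \<noteq> 0 \<Longrightarrow> (1 - c/D) * D = D - c"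
  by (simp add: left_diff_distrib)

definition EE :: "nat \<Rightarrow> nat \<Rightarrow> nat \<Rightarrow> nat set \<Rightarrow> ((nat\<Rightarrow>nat)\<times>(nat\<Rightarrow>nat)) set" where
  "EE p M N S = {x\<in>Om p M N. \<forall>i\<in>S. \<not> act (fst x) (snd x) i}"

definition qq :: "nat \<Rightarrow> nat \<Rightarrow> real" where "qq M N = 2 * (real M - 1) / (real M * real M * real N)"

lemma tail_step:
  assumes M: "M \<ge> 1" and N: "N \<ge> 2" and j: "odd j" "j < p" and jS: "j \<notin> S"
    and S: "\<forall>i\<in>S. odd i"
  shows "real (card (EE p M N (insert j S))) \<le> (1 - qq M N) * real (card (EE p M N S))"
proof -
  define \<phi> :: "(nat\<Rightarrow>nat)\<times>(nat\<Rightarrow>nat) \<Rightarrow> (nat\<Rightarrow>nat)\<times>(nat\<Rightarrow>nat)" where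
    "\<phi> x = ((fst x)(j-1 := 0, j := 0), (snd x)(j := 0))" for x
  define V where "V = {0..<M} \<times> {0..<M} \<times> {0..<N}"
  have j1: "j - 1 \<noteq> j" "j - 1 < p" using j by (auto elim: oddE)
  have "real (card (EE p M N (insert j S))) \<le> (\<Sum>x\<in>EE p M N S. 1 - qq M N)"
  proof (rule fiber_bound[where \<phi> = \<phi>])
    show "finite (EE p M N S)" unfolding EE_def by (rule finite_subset[OF _ finite_Om]) blast
    show "EE p M N (insert j S) \<subseteq> EE p M N S" unfolding EE_def by blast
    fix y assume "y \<in> \<phi> ` EE p M N S"
    then obtain x0 where x0: "x0 \<in> EE p M N S" and y: "y = \<phi> x0" by blast
    define upd where "upd v = ((fst y)(j-1 := fst v, j := fst (snd v)), (snd y)(j := snd (snd v)))" for v :: "nat \<times> nat \<times> nat"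
    define F where "F = {x\<in>EE p M N S. \<phi> x = y}"
    have x0O: "x0 \<in> Om p M N" using x0 unfolding EE_def by blast
    have upd_eq: "upd v = ((fst x0)(j-1 := fst v, j := fst (snd v)), (snd x0)(j := snd (snd v)))" for v
      unfolding upd_def y \<phi>_def using j1 by (simp add: fun_eq_iff)
    have actu: "act (fst (upd v)) (snd (upd v)) i = act (fst x0) (snd x0) i" if "i \<in> S" for i v
    proof -
      have "odd i" "i \<noteq> j" using S that jS by auto
      then have "i \<noteq> j - 1" "i - 1 \<noteq> j" "i - 1 \<noteq> j - 1" "i \<noteq> j" using j by (auto elim!: oddE)
      then show ?thesis unfolding upd_eq act_def by simp
    qed
    have actj: "act (fst (upd v)) (snd (upd v)) j \<longleftrightarrow> (fst v \<noteq> 0 \<and> fst (snd v) = 0 \<and> snd (snd v) < 2)" for v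
      unfolding upd_eq act_def using j1 by simp
    have FV: "F = upd ` V"
    proof
      show "F \<subseteq> upd ` V"
      proof
        fix x assume xF: "x \<in> F"
        then have xO: "x \<in> Om p M N" and px: "\<phi> x = y" unfolding F_def EE_def by auto
        define v where "v = (fst x (j-1), fst x j, snd x j)"
        have "v \<in> V" unfolding v_def V_def using xO j j1 unfolding Om_def by (auto simp: PiE_def Pi_def)
        moreover have "x = upd v" unfolding upd_def v_def px[symmetric] \<phi>_def using j1 by (simp add: prod_eq_iff fun_eq_iff)
        ultimately show "x \<in> upd ` V" by blast
      qed
      show "upd ` V \<subseteq> F"
      proof
        fix x assume "x \<in> upd ` V"
        then obtain v where v: "v \<in> V" and xv: "x = upd v" by blast
        have "x \<in> Om p M N" unfolding xv upd_eq using x0O v j j1 unfolding Om_def V_def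
          by (auto intro!: upd_PiE)
        moreover have "\<forall>i\<in>S. \<not> act (fst x) (snd x) i" using x0 actu unfolding xv EE_def by auto
        moreover have "\<phi> x = y" unfolding xv upd_eq y \<phi>_def using j1 by (simp add: prod_eq_iff fun_eq_iff)
        ultimately show "x \<in> F" unfolding F_def EE_def by blast
      qed
    qed
    have inj: "inj_on upd V"
    proof (rule inj_onI)
      fix v w assume "v \<in> V" "w \<in> V" and e: "upd v = upd w"
      have "fst (upd v) (j-1) = fst (upd w) (j-1)" "fst (upd v) j = fst (upd w) j" "snd (upd v) j = snd (upd w) j"
        using e by simp_all
      then show "v = w" unfolding upd_def using j1 by (simp add: prod_eq_iff)
    qed
    define W where "W = {1..<M} \<times> {0::nat} \<times> {0..<2::nat}"
    have WV: "W \<subseteq> V" unfolding W_def V_def using M N by auto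
    have GF: "EE p M N (insert j S) \<inter> F \<subseteq> upd ` (V - W)"
    proof
      fix x assume xG: "x \<in> EE p M N (insert j S) \<inter> F"
      then obtain v where v: "v \<in> V" and xv: "x = upd v" using FV by blast
      have "\<not> act (fst x) (snd x) j" using xG unfolding EE_def by blast
      then have "v \<notin> W" using actj[of v] unfolding xv W_def by auto
      then show "x \<in> upd ` (V - W)" using v xv by blast
    qed
    have cV: "card V = M * M * N" unfolding V_def by simp
    have cW: "card W = (M - 1) * 2" unfolding W_def by simp
    have "real (card (EE p M N (insert j S) \<inter> F)) \<le> real (card (upd ` (V - W)))"
      by (intro of_nat_mono card_mono GF) (simp add: V_def)
    also have "\<dots> \<le> real (card (V - W))" by (intro of_nat_mono card_image_le) (simp add: V_def)
    also have "\<dots> = real (M * M * N - (M - 1) * 2)"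
      using card_Diff_subset[OF _ WV] cV cW by (simp add: W_def)
    also have "\<dots> = (1 - qq M N) * real (card F)"
    proof -
      have le: "(M - 1) * 2 \<le> M * M * N"
      proof -
        have "(M - 1) * 2 \<le> M * 2" by simp
        also have "\<dots> \<le> M * (M * N)" using M N by (intro mult_left_mono) (auto intro: order_trans[OF _ mult_le_mono[of 1 M 2 N]])
        finally show ?thesis by (simp add: mult.assoc)
      qed
      have "card F = M * M * N" unfolding FV using card_image[OF inj] cV by simp
      moreover have "real M * real M * real N > 0" using M N by simp
      ultimately have cF: "real (card F) = real M * real M * real N" and Dp: "real M * real M * real N > 0" by simp_all
      have l: "real (M * M * N - (M - 1) * 2) = real M * real M * real N - 2 * (real M - 1)"
        using le M by (simp add: of_nat_diff)
      have r: "(1 - 2 * (real M - 1) / (real M * real M * real N)) * (real M * real M * real N)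
            = real M * real M * real N - 2 * (real M - 1)"
        by (rule aux2) (use M N in simp)
      show ?thesis unfolding l cF qq_def r ..
    qed
    also have "\<dots> = (\<Sum>x\<in>F. 1 - qq M N)" by simp
    finally show "real (card (EE p M N (insert j S) \<inter> {x\<in>EE p M N S. \<phi> x = y})) \<le> (\<Sum>x\<in>{x\<in>EE p M N S. \<phi> x = y}. 1 - qq M N)"
      unfolding F_def .
  qed
  also have "\<dots> = (1 - qq M N) * real (card (EE p M N S))" by simp
  finally show ?thesis .
qed




lemma card_Om: "card (Om p M N) = (M * N) ^ p"
  unfolding Om_def by (simp add: card_cartesian_product card_PiE power_mult_distrib)

lemma qq_bounds: assumes "M \<ge> 2" "N \<ge> 2" shows "0 < qq M N" "qq M N \<le> 1"
proof -
  show "0 < qq M N" using assms unfolding qq_def by (simp add: divide_pos_pos)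
  have a: "2 * (real M - 1) \<le> real M * real M * real N"
  proof -
    have "2 * (real M - 1) \<le> real M * 2" by simp
    also have "\<dots> \<le> real M * (real M * real N)"
    proof (rule mult_left_mono)
      have "real M * real N \<ge> 2 * 2" using assms by (intro mult_mono) auto
      then show "2 \<le> real M * real N" by simp
    qed simp
    finally show ?thesis by (simp add: mult.assoc)
  qed
  have "real M * real M * real N > 0" using assms by simp
  then show "qq M N \<le> 1" using a unfolding qq_def by (simp add: divide_le_eq_1)
qed

lemma EE_empty: "EE p M N {} = Om p M N" unfolding EE_def by simp

lemma tail_all:
  assumes M: "M \<ge> 2" and N: "N \<ge> 2" and fin: "finite S" and S: "\<forall>i\<in>S. odd i \<and> i < p"
  shows "real (card (EE p M N S)) \<le> (1 - qq M N) ^ card S * real (card (Om p M N))"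
  using fin S
proof (induction S rule: finite_induct)
  case empty
  then show ?case by (simp add: EE_empty)
next
  case (insert j S)
  have "real (card (EE p M N (insert j S))) \<le> (1 - qq M N) * real (card (EE p M N S))"
    by (rule tail_step) (use M N insert in auto)
  also have "\<dots> \<le> (1 - qq M N) * ((1 - qq M N) ^ card S * real (card (Om p M N)))"
    by (rule mult_left_mono) (use insert qq_bounds[OF M N] in auto)
  also have "\<dots> = (1 - qq M N) ^ card (insert j S) * real (card (Om p M N))"
    using insert by simp
  finally show ?case .
qed

definition Grp :: "nat \<Rightarrow> nat \<Rightarrow> nat set" where
  "Grp g r = (\<lambda>j. 2*j+1) ` {r*g..<(r+1)*g}"

lemma card_Grp: "card (Grp g r) = g"
proof -
  have "inj_on (\<lambda>j::nat. 2*j+1) {r*g..<(r+1)*g}" by (rule inj_onI) simp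
  then show ?thesis unfolding Grp_def by (simp add: card_image)
qed

lemma Grp_prop: assumes "r < m" "g = (p div 2) div m" shows "\<forall>i\<in>Grp g r. odd i \<and> i < p"
proof
  fix i assume "i \<in> Grp g r"
  then obtain j where i: "i = 2*j+1" and j: "j < (r+1)*g" unfolding Grp_def by auto
  have "(r+1)*g \<le> m * g" using assms by (intro mult_right_mono) auto
  also have "m * g \<le> p div 2" using assms by simp
  finally have "j < p div 2" using j by linarith
  then show "odd i \<and> i < p" using i by auto
qed

lemma pigeon:
  assumes x: "x \<in> Om p M N" and K: "card (coin p (fst x) (snd x)) < m" and g: "g = (p div 2) div m"
  shows "\<exists>r<m. x \<in> EE p M N (Grp g r)"
proof (rule ccontr)
  assume "\<not> ?thesis"
  then have "\<forall>r<m. \<exists>i\<in>Grp g r. act (fst x) (snd x) i" using x unfolding EE_def by blast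
  then obtain f where f: "\<And>r. r < m \<Longrightarrow> f r \<in> Grp g r \<and> act (fst x) (snd x) (f r)" by metis
  have sub: "f ` {..<m} \<subseteq> coin p (fst x) (snd x)"
  proof
    fix i assume "i \<in> f ` {..<m}"
    then obtain r where r: "r < m" "i = f r" by blast
    then have "odd i \<and> i < p" using Grp_prop[OF r(1) g] f by blast
    then show "i \<in> coin p (fst x) (snd x)" using f r unfolding coin_def by auto
  qed
  have inj: "inj_on f {..<m}"
  proof (rule inj_onI)
    fix r r' assume r: "r \<in> {..<m}" and r': "r' \<in> {..<m}" and e: "f r = f r'"
    have "f r \<in> Grp g r" using f r by blast
    then obtain j where j0: "j \<in> {r*g..<(r+1)*g}" "f r = 2*j+1" unfolding Grp_def by blast
    then have j: "f r = 2*j+1" "r*g \<le> j" "j < (r+1)*g" by auto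
    have "f r' \<in> Grp g r'" using f r' by blast
    then obtain j' where j'0: "j' \<in> {r'*g..<(r'+1)*g}" "f r' = 2*j'+1" unfolding Grp_def by blast
    then have j': "f r' = 2*j'+1" "r'*g \<le> j'" "j' < (r'+1)*g" by auto
    have jj: "j = j'" using e j j' by simp
    show "r = r'"
    proof (rule ccontr)
      assume "r \<noteq> r'"
      then consider "r < r'" | "r' < r" by linarith
      then show False
      proof cases
        case 1
        then have "(r+1)*g \<le> r'*g" by (intro mult_right_mono) auto
        then show False using j j' jj by linarith
      next
        case 2
        then have "(r'+1)*g \<le> r*g" by (intro mult_right_mono) auto
        then show False using j j' jj by linarith
      qed
    qed
  qed
  have "m = card (f ` {..<m})" using card_image[OF inj] by simp
  also have "\<dots> \<le> card (coin p (fst x) (snd x))"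
    by (rule card_mono[OF _ sub]) (rule finite_subset[OF coin_sub], simp)
  finally show False using K by simp
qed

lemma small_K:
  assumes M: "M \<ge> 2" and N: "N \<ge> 2" and g: "g = (p div 2) div m"
  shows "real (card {x\<in>Om p M N. card (coin p (fst x) (snd x)) < m}) \<le> real m * (1 - qq M N) ^ g * real (card (Om p M N))"
proof -
  have finEE: "finite (EE p M N S)" for S by (rule finite_subset[OF _ finite_Om]) (auto simp: EE_def)
  have "{x\<in>Om p M N. card (coin p (fst x) (snd x)) < m} \<subseteq> (\<Union>r\<in>{..<m}. EE p M N (Grp g r))"
  proof
    fix x assume "x \<in> {x\<in>Om p M N. card (coin p (fst x) (snd x)) < m}"
    then have x: "x \<in> Om p M N" and K: "card (coin p (fst x) (snd x)) < m" by auto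
    from pigeon[OF x K g] show "x \<in> (\<Union>r\<in>{..<m}. EE p M N (Grp g r))" by blast
  qed
  then have "card {x\<in>Om p M N. card (coin p (fst x) (snd x)) < m} \<le> card (\<Union>r\<in>{..<m}. EE p M N (Grp g r))"
    by (rule card_mono[rotated]) (intro finite_UN_I finite_lessThan finEE)
  also have "\<dots> \<le> (\<Sum>r\<in>{..<m}. card (EE p M N (Grp g r)))" by (rule card_UN_le) simp
  finally have c: "card {x\<in>Om p M N. card (coin p (fst x) (snd x)) < m} \<le> (\<Sum>r\<in>{..<m}. card (EE p M N (Grp g r)))" .
  have "real (card {x\<in>Om p M N. card (coin p (fst x) (snd x)) < m}) \<le> (\<Sum>r\<in>{..<m}. real (card (EE p M N (Grp g r))))"
    using of_nat_mono[OF c, where 'a=real] by (simp only: of_nat_sum)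
  also have "\<dots> \<le> (\<Sum>r\<in>{..<m}. (1 - qq M N) ^ g * real (card (Om p M N)))"
  proof (rule sum_mono)
    fix r assume r: "r \<in> {..<m}"
    have "real (card (EE p M N (Grp g r))) \<le> (1 - qq M N) ^ card (Grp g r) * real (card (Om p M N))"
    proof (rule tail_all[OF M N])
      show "finite (Grp g r)" by (simp add: Grp_def)
      show "\<forall>i\<in>Grp g r. odd i \<and> i < p" using Grp_prop[OF _ g] r by blast
    qed
    then show "real (card (EE p M N (Grp g r))) \<le> (1 - qq M N) ^ g * real (card (Om p M N))"
      by (simp add: card_Grp)
  qed
  also have "\<dots> = real m * (1 - qq M N) ^ g * real (card (Om p M N))" by simp
  finally show ?thesis .
qed




lemma delta_bound:
  assumes M: "M \<ge> 2" and N: "N \<ge> 2" and e: "e \<ge> 0" and hm: "\<forall>k\<ge>m. hh k \<le> e"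
  shows "delta p M N \<le> e + real m * (1 - qq M N) ^ ((p div 2) div m)"
proof -
  define g where "g = (p div 2) div m"
  define G where "G = {(a, b). a \<in> {0..<p} \<rightarrow>\<^sub>E {0..<M} \<and> b \<in> {0..<p} \<rightarrow>\<^sub>E {0..<N} \<and>
        image_mset (\<lambda>y. (a y, b y)) (mset_set {0..<p})
        = image_mset (\<lambda>y. (a y, b ((y + 1) mod p))) (mset_set {0..<p})}"
  define K where "K x = card (coin p (fst x) (snd x))" for x
  have cO: "real (card (Om p M N)) = real (M * N) ^ p" by (simp add: card_Om)
  have Opos: "real (card (Om p M N)) > 0" unfolding cO using M N by simp
  have "card G \<le> card {x\<in>Om p M N. LL p (fst x) (snd x) = RR p (fst x) (snd x)}"
    unfolding G_def by (rule card_mono[OF _ good_sub]) (rule finite_subset[OF _ finite_Om], blast)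
  then have "real (card G) \<le> real (card {x\<in>Om p M N. LL p (fst x) (snd x) = RR p (fst x) (snd x)})" by simp
  also have "\<dots> \<le> (\<Sum>x\<in>Om p M N. hh (K x))" unfolding K_def by (rule anti[OF N])
  also have "\<dots> \<le> (\<Sum>x\<in>Om p M N. e + (if K x < m then 1 else 0))"
  proof (rule sum_mono)
    fix x
    show "hh (K x) \<le> e + (if K x < m then 1 else 0)"
    proof (cases "K x < m")
      case True then show ?thesis using hh_le1[of "K x"] e by simp
    next
      case False then show ?thesis using hm by simp
    qed
  qed
  also have "\<dots> = e * real (card (Om p M N)) + real (card {x\<in>Om p M N. K x < m})"
  proof -
    have "(\<Sum>x\<in>Om p M N. e + (if K x < m then 1 else 0)) = (\<Sum>x\<in>Om p M N. e) + (\<Sum>x\<in>Om p M N. (if K x < m then 1 else 0))"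
      by (rule sum.distrib)
    also have "(\<Sum>x\<in>Om p M N. (if K x < m then 1 else (0::real))) = (\<Sum>x\<in>{x\<in>Om p M N. K x < m}. 1)"
      by (rule sum.inter_filter[symmetric]) (rule finite_Om)
    also have "\<dots> = real (card {x\<in>Om p M N. K x < m})" by simp
    also have "(\<Sum>x\<in>Om p M N. e) = e * real (card (Om p M N))" by simp
    finally show ?thesis .
  qed
  also have "\<dots> \<le> e * real (card (Om p M N)) + real m * (1 - qq M N) ^ g * real (card (Om p M N))"
    using small_K[OF M N g_def] unfolding K_def by (rule add_left_mono)
  finally have c: "real (card G) \<le> (e + real m * (1 - qq M N) ^ g) * real (card (Om p M N))"
    by (simp add: algebra_simps)
  have "delta p M N = real (card G) / real (card (Om p M N))" unfolding delta_def G_def cO by simp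
  also have "\<dots> \<le> e + real m * (1 - qq M N) ^ g" using c Opos by (simp add: divide_le_eq)
  finally show ?thesis unfolding g_def .
qed

lemma delta_nonneg: "delta p M N \<ge> 0" unfolding delta_def by simp

theorem theorem8p4:
  fixes M N :: nat
  assumes "M \<ge> 2" and "N \<ge> 2"
  shows "(\<lambda>p. delta p M N) \<longlonglongrightarrow> 0"
proof (rule LIMSEQ_I)
  fix r :: real assume r: "r > 0"
  obtain m0 where m0: "\<forall>k\<ge>m0. hh k \<le> r/3" using hh_small[of "r/3"] r by auto
  define m where "m = Suc m0"
  have hm: "\<forall>k\<ge>m. hh k \<le> r/3" using m0 unfolding m_def by auto
  have q: "0 < qq M N" "qq M N \<le> 1" using qq_bounds assms by auto
  have "(\<lambda>k. real m * (1 - qq M N) ^ k) \<longlonglongrightarrow> real m * 0"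
    by (intro tendsto_mult tendsto_const LIMSEQ_power_zero) (use q in auto)
  then have "(\<lambda>k. real m * (1 - qq M N) ^ k) \<longlonglongrightarrow> 0" by simp
  then have "\<exists>no. \<forall>k\<ge>no. norm (real m * (1 - qq M N) ^ k - 0) < r/3"
    by (rule LIMSEQ_D) (use r in simp)
  then obtain K0 where K0: "\<forall>k\<ge>K0. norm (real m * (1 - qq M N) ^ k - 0) < r/3" by blast
  show "\<exists>no. \<forall>p\<ge>no. norm (delta p M N - 0) < r"
  proof (intro exI allI impI)
    fix p assume p: "p \<ge> 2 * m * K0"
    have "(2*(m*K0)) div 2 \<le> p div 2" by (rule div_le_mono) (use p in \<open>simp add: mult.assoc\<close>)
    then have "m*K0 \<le> p div 2" by simp
    then have "(m*K0) div m \<le> (p div 2) div m" by (rule div_le_mono)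
    moreover have "(m*K0) div m = K0" unfolding m_def by (rule nonzero_mult_div_cancel_left) simp
    ultimately have gK: "K0 \<le> (p div 2) div m" by simp
    have "delta p M N \<le> r/3 + real m * (1 - qq M N) ^ ((p div 2) div m)"
      by (rule delta_bound) (use assms r hm in auto)
    also have "\<dots> < r/3 + r/3" using K0 gK by auto
    finally show "norm (delta p M N - 0) < r" using delta_nonneg[of p M N] r by simp
  qed
qed


end
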